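(* For positive integers $n$ and $m$, $\chi_{ld}(F_n+\overline{K_{m}})=2n+2$.
   Context: All graphs are finite, simple and undirected. For a graph $G=(V,E)$ of order $N$ without isolated vertices, a bijection $f\colon V\to\{1,2,\dots,N\}$ is a local distance antimagic labeling if $w(u)\neq w(v)$ for every edge $uv$, where $w(u)=\sum_{x\in N(u)}f(x)$ and $N(u)$ is the open neighborhood of $u$. $\chi_{ld}(G)$ is the minimum number of distinct values of $w$ over all local distance antimagic labelings of $G$. The friendship graph $F_n$ consists of $n$ triangles sharing one common vertex $c$ (vertices $c,u_i,v_i$, $1\le i\le n$, with edges $cu_i, cv_i, u_iv_i$), i.e. $F_n=nK_2+K_1$. $\overline{K_m}$ is the edgeless graph on $m$ vertices. $G+H$ is the join: the disjoint union of $G$ and $H$ plus all edges between $V(G)$ and $V(H)$. *)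

theory Defs
  imports Main
begin

definition simple_graph :: "'v set \<Rightarrow> ('v \<Rightarrow> 'v \<Rightarrow> bool) \<Rightarrow> bool" where
  "simple_graph V E \<longleftrightarrow> finite V \<and> (\<forall>x y. E x y \<longrightarrow> x \<in> V \<and> y \<in> V \<and> x \<noteq> y \<and> E y x)"

definition nbhd :: "'v set \<Rightarrow> ('v \<Rightarrow> 'v \<Rightarrow> bool) \<Rightarrow> 'v \<Rightarrow> 'v set" where
  "nbhd V E u = {x \<in> V. E u x}"

definition vweight :: "'v set \<Rightarrow> ('v \<Rightarrow> 'v \<Rightarrow> bool) \<Rightarrow> ('v \<Rightarrow> nat) \<Rightarrow> 'v \<Rightarrow> nat" where
  "vweight V E f u = (\<Sum>x\<in>nbhd V E u. f x)"

definition ld_antimagic :: "'v set \<Rightarrow> ('v \<Rightarrow> 'v \<Rightarrow> bool) \<Rightarrow> ('v \<Rightarrow> nat) \<Rightarrow> bool" where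
  "ld_antimagic V E f \<longleftrightarrow> bij_betw f V {1..card V} \<and>
     (\<forall>u\<in>V. \<forall>v\<in>V. E u v \<longrightarrow> vweight V E f u \<noteq> vweight V E f v)"

definition chi_ld :: "'v set \<Rightarrow> ('v \<Rightarrow> 'v \<Rightarrow> bool) \<Rightarrow> nat" where
  "chi_ld V E = Min {card (vweight V E f ` V) | f. ld_antimagic V E f}"

datatype fvert = Center | Uv nat | Vv nat

definition friendship_V :: "nat \<Rightarrow> fvert set" where
  "friendship_V n = {Center} \<union> Uv ` {1..n} \<union> Vv ` {1..n}"

definition friendship_E :: "nat \<Rightarrow> fvert \<Rightarrow> fvert \<Rightarrow> bool" where
  "friendship_E n x y \<longleftrightarrow> x \<in> friendship_V n \<and> y \<in> friendship_V n \<and>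
     ((x = Center \<and> y \<noteq> Center) \<or> (y = Center \<and> x \<noteq> Center) \<or>
      (\<exists>i. (x = Uv i \<and> y = Vv i) \<or> (x = Vv i \<and> y = Uv i)))"

definition empty_V :: "nat \<Rightarrow> nat set" where
  "empty_V m = {1..m}"

definition empty_E :: "nat \<Rightarrow> nat \<Rightarrow> bool" where
  "empty_E x y = False"

definition join_V :: "'a set \<Rightarrow> 'b set \<Rightarrow> ('a + 'b) set" where
  "join_V V1 V2 = Inl ` V1 \<union> Inr ` V2"

fun join_E :: "'a set \<Rightarrow> ('a \<Rightarrow> 'a \<Rightarrow> bool) \<Rightarrow> 'b set \<Rightarrow> ('b \<Rightarrow> 'b \<Rightarrow> bool)
                 \<Rightarrow> ('a + 'b) \<Rightarrow> ('a + 'b) \<Rightarrow> bool" where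
  "join_E V1 E1 V2 E2 (Inl x) (Inl y) = E1 x y"
| "join_E V1 E1 V2 E2 (Inr x) (Inr y) = E2 x y"
| "join_E V1 E1 V2 E2 (Inl x) (Inr y) = (x \<in> V1 \<and> y \<in> V2)"
| "join_E V1 E1 V2 E2 (Inr x) (Inl y) = (x \<in> V2 \<and> y \<in> V1)"

end

theory Submission
  imports Defs
begin

definition GV :: "nat \<Rightarrow> nat \<Rightarrow> (fvert + nat) set" where
  "GV n m = join_V (friendship_V n) (empty_V m)"
definition GE :: "nat \<Rightarrow> nat \<Rightarrow> (fvert + nat) \<Rightarrow> (fvert + nat) \<Rightarrow> bool" where
  "GE n m = join_E (friendship_V n) (friendship_E n) (empty_V m) empty_E"

lemma FV_fin: "finite (friendship_V n)"
  by (simp add: friendship_V_def)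

lemma GV_fin: "finite (GV n m)"
  by (simp add: GV_def join_V_def FV_fin empty_V_def)

lemma FV_card: "card (friendship_V n) = 2*n+1"
proof -
  have "card (Uv ` {1..n} \<union> Vv ` {1..n}) = card (Uv ` {1..n}) + card (Vv ` {1..n})"
    by (rule card_Un_disjoint) auto
  also have "\<dots> = n + n" by (simp add: card_image inj_on_def)
  finally have h: "card (Uv ` {1..n} \<union> Vv ` {1..n}) = n+n" .
  have "friendship_V n = insert Center (Uv ` {1..n} \<union> Vv ` {1..n})"
    by (auto simp: friendship_V_def)
  then show ?thesis using h by (simp add: card_insert_disjoint image_iff)
qed

lemma GV_card: "card (GV n m) = 2*n+1+m"
proof -
  have "card (GV n m) = card (Inl ` friendship_V n :: (fvert+nat) set) + card (Inr ` {1..m} :: (fvert+nat) set)"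
    unfolding GV_def join_V_def empty_V_def
    by (rule card_Un_disjoint) (auto simp: FV_fin)
  then show ?thesis by (simp add: card_image FV_card)
qed

lemma nb_C: "nbhd (GV n m) (GE n m) (Inl Center) = GV n m - {Inl Center}"
  unfolding nbhd_def GV_def GE_def
  apply (rule set_eqI)
  subgoal for x by (cases x) (auto simp: join_V_def friendship_E_def friendship_V_def empty_V_def)
  done

lemma nb_U: "i \<in> {1..n} \<Longrightarrow> nbhd (GV n m) (GE n m) (Inl (Uv i)) = {Inl Center, Inl (Vv i)} \<union> Inr ` {1..m}"
  unfolding nbhd_def GV_def GE_def
  apply (rule set_eqI)
  subgoal for x by (cases x) (auto simp: join_V_def friendship_E_def friendship_V_def empty_V_def)
  done

lemma nb_V: "i \<in> {1..n} \<Longrightarrow> nbhd (GV n m) (GE n m) (Inl (Vv i)) = {Inl Center, Inl (Uv i)} \<union> Inr ` {1..m}"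
  unfolding nbhd_def GV_def GE_def
  apply (rule set_eqI)
  subgoal for x by (cases x) (auto simp: join_V_def friendship_E_def friendship_V_def empty_V_def)
  done

lemma nb_W: "j \<in> {1..m} \<Longrightarrow> nbhd (GV n m) (GE n m) (Inr j) = Inl ` friendship_V n"
  unfolding nbhd_def GV_def GE_def
  apply (rule set_eqI)
  subgoal for x by (cases x) (auto simp: join_V_def friendship_E_def friendship_V_def empty_V_def empty_E_def)
  done


definition UV :: "nat \<Rightarrow> fvert set" where
  "UV n = Uv ` {1..n} \<union> Vv ` {1..n}"

lemma UV_fin: "finite (UV n)" by (simp add: UV_def)
lemma UV_card: "card (UV n) = 2*n"
proof -
  have "card (Uv ` {1..n} \<union> Vv ` {1..n}) = card (Uv ` {1..n}) + card (Vv ` {1..n})"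
    by (rule card_Un_disjoint) auto
  also have "\<dots> = n + n" by (simp add: card_image inj_on_def)
  finally show ?thesis by (simp add: UV_def)
qed

lemma FV_UV: "friendship_V n = insert Center (UV n)"
  by (auto simp: friendship_V_def UV_def)

lemma Center_UV: "Center \<notin> UV n" by (auto simp: UV_def)

lemma GV_eq: "GV n m = insert (Inl Center) (Inl ` UV n) \<union> Inr ` {1..m}"
  by (auto simp: GV_def join_V_def FV_UV empty_V_def)

lemma mem_GV[simp]:
  "Inl Center \<in> GV n m"
  "Inl (Uv i) \<in> GV n m \<longleftrightarrow> i \<in> {1..n}"
  "Inl (Vv i) \<in> GV n m \<longleftrightarrow> i \<in> {1..n}"
  "Inr j \<in> GV n m \<longleftrightarrow> j \<in> {1..m}"
  by (auto simp: GV_def join_V_def friendship_V_def empty_V_def)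

definition Wsum :: "nat \<Rightarrow> (fvert + nat \<Rightarrow> nat) \<Rightarrow> nat" where
  "Wsum m f = (\<Sum>j\<in>{1..m}. f (Inr j))"
definition Tsum :: "nat \<Rightarrow> (fvert + nat \<Rightarrow> nat) \<Rightarrow> nat" where
  "Tsum n f = (\<Sum>y\<in>UV n. f (Inl y))"

lemma sum_Inr: "(\<Sum>x\<in>Inr ` A. f x) = (\<Sum>j\<in>A. f (Inr j))"
  by (simp add: sum.reindex inj_on_def)
lemma sum_Inl: "(\<Sum>x\<in>Inl ` A. f x) = (\<Sum>j\<in>A. f (Inl j))"
  by (simp add: sum.reindex inj_on_def)

lemma sum_GV: "sum f (GV n m) = f (Inl Center) + Tsum n f + Wsum m f"
proof -
  have "sum f (GV n m) = sum f (insert (Inl Center) (Inl ` UV n)) + sum f (Inr ` {1..m})"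
    unfolding GV_eq by (rule sum.union_disjoint) (auto simp: UV_fin)
  also have "sum f (insert (Inl Center) (Inl ` UV n)) = f (Inl Center) + sum f (Inl ` UV n)"
    by (rule sum.insert) (auto simp: UV_fin Center_UV)
  finally show ?thesis by (simp add: sum_Inl sum_Inr Tsum_def Wsum_def)
qed

lemma w_C: "vweight (GV n m) (GE n m) f (Inl Center) + f (Inl Center) = f (Inl Center) + Tsum n f + Wsum m f"
proof -
  have "sum f (GV n m) = f (Inl Center) + sum f (GV n m - {Inl Center})"
    by (rule sum.remove) (auto simp: GV_fin)
  then show ?thesis unfolding vweight_def nb_C using sum_GV[of f n m] by simp
qed

lemma w_U: "i \<in> {1..n} \<Longrightarrow> vweight (GV n m) (GE n m) f (Inl (Uv i)) = f (Inl Center) + f (Inl (Vv i)) + Wsum m f"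
  unfolding vweight_def
  apply (subst nb_U, assumption)
  apply (subst sum.union_disjoint)
  apply (auto simp: sum_Inr Wsum_def)
  done

lemma w_V: "i \<in> {1..n} \<Longrightarrow> vweight (GV n m) (GE n m) f (Inl (Vv i)) = f (Inl Center) + f (Inl (Uv i)) + Wsum m f"
  unfolding vweight_def
  apply (subst nb_V, assumption)
  apply (subst sum.union_disjoint)
  apply (auto simp: sum_Inr Wsum_def)
  done

lemma w_W: "j \<in> {1..m} \<Longrightarrow> vweight (GV n m) (GE n m) f (Inr j) = f (Inl Center) + Tsum n f"
  unfolding vweight_def
  apply (subst nb_W, assumption)
  apply (simp add: FV_UV Tsum_def)
  apply (subst sum.insert)
    apply (auto simp: UV_fin Center_UV sum_Inl)
  done


fun partner :: "fvert \<Rightarrow> fvert" where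
  "partner Center = Center" | "partner (Uv i) = Vv i" | "partner (Vv i) = Uv i"

lemma partner_UV: "y \<in> UV n \<Longrightarrow> partner y \<in> UV n \<and> partner (partner y) = y"
  by (auto simp: UV_def)

lemma w_UV: "y \<in> UV n \<Longrightarrow> vweight (GV n m) (GE n m) f (Inl y) = f (Inl Center) + f (Inl (partner y)) + Wsum m f"
  by (auto simp: UV_def w_U w_V)

lemma adj1: "y \<in> UV n \<Longrightarrow> GE n m (Inl Center) (Inl y)"
  by (auto simp: GE_def UV_def friendship_E_def friendship_V_def)
lemma adj2: "m \<ge> 1 \<Longrightarrow> GE n m (Inl Center) (Inr 1)"
  by (auto simp: GE_def friendship_V_def empty_V_def)
lemma adj3: "m \<ge> 1 \<Longrightarrow> y \<in> UV n \<Longrightarrow> GE n m (Inr 1) (Inl y)"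
  by (auto simp: GE_def UV_def friendship_V_def empty_V_def)

lemma UV_GV: "y \<in> UV n \<Longrightarrow> Inl y \<in> GV n m"
  by (auto simp: UV_def)

lemma count:
  assumes ld: "ld_antimagic (GV n m) (GE n m) f" and m: "m \<ge> 1"
  shows "card (vweight (GV n m) (GE n m) f ` GV n m) = 2*n+2"
proof -
  let ?w = "vweight (GV n m) (GE n m) f"
  define R :: "(fvert+nat) set" where "R = insert (Inl Center) (insert (Inr 1) (Inl ` UV n))"
  have inj: "inj_on f (GV n m)" using ld by (simp add: ld_antimagic_def bij_betw_def)
  have adj: "\<And>u v. u \<in> GV n m \<Longrightarrow> v \<in> GV n m \<Longrightarrow> GE n m u v \<Longrightarrow> ?w u \<noteq> ?w v"
    using ld by (simp add: ld_antimagic_def)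
  have img: "?w ` GV n m = ?w ` R"
  proof
    show "?w ` R \<subseteq> ?w ` GV n m" using m by (auto simp: R_def GV_eq)
  next
    show "?w ` GV n m \<subseteq> ?w ` R"
    proof
      fix z assume "z \<in> ?w ` GV n m"
      then obtain u where u: "u \<in> GV n m" "z = ?w u" by auto
      show "z \<in> ?w ` R"
      proof (cases "u \<in> R")
        case True then show ?thesis using u by auto
      next
        case False
        then obtain j where j: "u = Inr j" "j \<in> {1..m}" using u by (auto simp: R_def GV_eq)
        have "?w u = ?w (Inr 1)" using j m by (simp add: w_W)
        then show ?thesis using u by (auto simp: R_def)
      qed
    qed
  qed
  have uvinj: "y = z" if "y \<in> UV n" "z \<in> UV n" "?w (Inl y) = ?w (Inl z)" for y z
  proof -
    have "f (Inl (partner y)) = f (Inl (partner z))" using that by (simp add: w_UV)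
    moreover have "Inl (partner y) \<in> GV n m" "Inl (partner z) \<in> GV n m"
      using that partner_UV UV_GV by blast+
    ultimately have "partner y = partner z" using inj by (auto dest: inj_onD)
    then show ?thesis using partner_UV that by metis
  qed
  have "inj_on ?w R"
  proof (rule inj_onI)
    fix x y assume x: "x \<in> R" and y: "y \<in> R" and e: "?w x = ?w y"
    have xg: "x \<in> GV n m" and yg: "y \<in> GV n m" using x y m by (auto simp: R_def UV_GV)
    show "x = y"
    proof (rule ccontr)
      assume ne: "x \<noteq> y"
      have "GE n m x y \<or> GE n m y x \<or> (\<exists>a b. x = Inl a \<and> y = Inl b \<and> a \<in> UV n \<and> b \<in> UV n)"
        using x y ne m adj1 adj2 adj3 unfolding R_def by blast
      then show False
        using adj[OF xg yg] adj[OF yg xg] e uvinj ne by metis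
    qed
  qed
  then have "card (?w ` R) = card R" by (rule card_image)
  also have "card R = 2*n+2"
  proof -
    have "card (Inl ` UV n :: (fvert+nat) set) = 2*n" by (simp add: card_image UV_card)
    then show ?thesis by (simp add: R_def card_insert_if UV_fin Center_UV image_iff)
  qed
  finally show ?thesis using img by simp
qed


lemma edges:
  assumes "GE n m u v"
  shows "(u = Inl Center \<and> (\<exists>y\<in>UV n. v = Inl y)) \<or> (v = Inl Center \<and> (\<exists>y\<in>UV n. u = Inl y)) \<or>
         (u = Inl Center \<and> (\<exists>j. v = Inr j)) \<or> (v = Inl Center \<and> (\<exists>j. u = Inr j)) \<or>
         (\<exists>y\<in>UV n. u = Inl y \<and> v = Inl (partner y)) \<or>
         (\<exists>y\<in>UV n. \<exists>j. (u = Inl y \<and> v = Inr j) \<or> (u = Inr j \<and> v = Inl y))"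
proof (cases u)
  case (Inl x)
  then show ?thesis
  proof (cases v)
    case (Inl z)
    have fe: "friendship_E n x z" using assms \<open>u = Inl x\<close> Inl by (simp add: GE_def)
    show ?thesis
      using fe \<open>u = Inl x\<close> Inl unfolding friendship_E_def
      by (cases x; cases z) (auto simp: UV_def friendship_V_def)
  next
    case (Inr j)
    have "x \<in> friendship_V n" using assms \<open>u = Inl x\<close> Inr by (simp add: GE_def)
    then show ?thesis using \<open>u = Inl x\<close> Inr by (cases x) (auto simp: UV_def friendship_V_def)
  qed
next
  case (Inr j)
  then show ?thesis
  proof (cases v)
    case (Inl x)
    have "x \<in> friendship_V n" using assms \<open>u = Inr j\<close> Inl by (simp add: GE_def)
    then show ?thesis using \<open>u = Inr j\<close> Inl by (cases x) (auto simp: UV_def friendship_V_def)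
  next
    case (Inr k)
    then show ?thesis using assms \<open>u = Inr j\<close> by (simp add: GE_def empty_E_def)
  qed
qed

lemma partner_ne: "y \<in> UV n \<Longrightarrow> partner y \<noteq> y"
  by (auto simp: UV_def)

lemma suff:
  assumes bij: "bij_betw f (GV n m) {1..card (GV n m)}"
    and c1: "f (Inl Center) = 1" and W1: "Wsum m f \<noteq> 1"
    and cond: "\<And>y. y \<in> UV n \<Longrightarrow> Tsum n f \<noteq> 1 + f (Inl y) \<and> Tsum n f \<noteq> f (Inl y) + Wsum m f"
  shows "ld_antimagic (GV n m) (GE n m) f"
  unfolding ld_antimagic_def
proof (intro conjI ballI impI)
  show "bij_betw f (GV n m) {1..card (GV n m)}" by fact
  have inj: "inj_on f (GV n m)" using bij by (simp add: bij_betw_def)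
  let ?w = "vweight (GV n m) (GE n m) f"
  have wC: "?w (Inl Center) = Tsum n f + Wsum m f" using w_C[of n m f] c1 by simp
  have wY: "y \<in> UV n \<Longrightarrow> ?w (Inl y) = 1 + f (Inl (partner y)) + Wsum m f" for y
    using w_UV[of y n m f] c1 by simp
  have wJ: "j \<in> {1..m} \<Longrightarrow> ?w (Inr j) = 1 + Tsum n f" for j
    using w_W[of j m n f] c1 by simp
  have pf: "y \<in> UV n \<Longrightarrow> f (Inl (partner y)) \<noteq> f (Inl y)" for y
  proof
    assume y: "y \<in> UV n" and e: "f (Inl (partner y)) = f (Inl y)"
    have "Inl (partner y) \<in> GV n m" "Inl y \<in> GV n m" using y partner_UV UV_GV by blast+
    then have "partner y = y" using inj e by (auto dest: inj_onD)
    then show False using partner_ne y by blast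
  qed
  fix u v assume u: "u \<in> GV n m" and v: "v \<in> GV n m" and e: "GE n m u v"
  note E = edges[OF e]
  have W1': "Tsum n f + Wsum m f \<noteq> 1 + Tsum n f" using W1 by simp
  show "?w u \<noteq> ?w v"
    using E
  proof (elim disjE conjE bexE exE)
    fix y assume "u = Inl Center" "y \<in> UV n" "v = Inl y"
    then show ?thesis using wC wY cond[of "partner y"] partner_UV[of y n] by auto
  next
    fix y assume "v = Inl Center" "y \<in> UV n" "u = Inl y"
    then show ?thesis using wC wY cond[of "partner y"] partner_UV[of y n] by auto
  next
    fix j assume "u = Inl Center" "v = Inr j"
    then show ?thesis using wC wJ W1' v by auto
  next
    fix j assume "v = Inl Center" "u = Inr j"
    then show ?thesis using wC wJ W1' u by auto
  next
    fix y assume "y \<in> UV n" "u = Inl y" "v = Inl (partner y)"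
    then show ?thesis using wY pf partner_UV[of y n] by auto
  next
    fix y j assume "y \<in> UV n" "u = Inl y" "v = Inr j"
    then show ?thesis using wY wJ cond[of "partner y"] partner_UV[of y n] u v by auto
  next
    fix y j assume "y \<in> UV n" "u = Inr j" "v = Inl y"
    then show ?thesis using wY wJ cond[of "partner y"] partner_UV[of y n] u v by auto
  qed
qed


lemma T_rest:
  assumes y: "y \<in> UV n" and lo: "\<And>z. z \<in> UV n \<Longrightarrow> lo \<le> f (Inl z)"
  shows "f (Inl y) + (2*n-1)*lo \<le> Tsum n f"
proof -
  have "Tsum n f = f (Inl y) + (\<Sum>z\<in>UV n - {y}. f (Inl z))"
    unfolding Tsum_def by (rule sum.remove[OF UV_fin y])
  moreover have "card (UV n - {y}) * lo \<le> (\<Sum>z\<in>UV n - {y}. f (Inl z))"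
    using sum_bounded_below[of "UV n - {y}" lo "\<lambda>z. f (Inl z)"] lo by auto
  moreover have "card (UV n - {y}) = 2*n-1" using y by (simp add: UV_card UV_fin)
  ultimately show ?thesis by simp
qed

lemma T_ub:
  assumes hi: "\<And>z. z \<in> UV n \<Longrightarrow> f (Inl z) \<le> hi"
  shows "Tsum n f \<le> 2*n*hi"
  using sum_bounded_above[of "UV n" "\<lambda>z. f (Inl z)" hi] hi unfolding Tsum_def by (simp add: UV_card)

lemma W_lb:
  assumes "\<And>j. j \<in> {1..m} \<Longrightarrow> lo \<le> f (Inr j)"
  shows "m*lo \<le> Wsum m f"
  using sum_bounded_below[of "{1..m}" lo "\<lambda>j. f (Inr j)"] assms unfolding Wsum_def by simp

lemma W_ub:
  assumes "\<And>j. j \<in> {1..m} \<Longrightarrow> f (Inr j) \<le> hi"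
  shows "Wsum m f \<le> m*hi"
  using sum_bounded_above[of "{1..m}" "\<lambda>j. f (Inr j)" hi] assms unfolding Wsum_def by simp

definition fA :: "nat \<Rightarrow> nat \<Rightarrow> fvert + nat \<Rightarrow> nat" where
  "fA n m u = (case u of Inl Center \<Rightarrow> 1 | Inl (Uv i) \<Rightarrow> m+1+i | Inl (Vv i) \<Rightarrow> m+1+n+i | Inr j \<Rightarrow> j+1)"
definition fB :: "nat \<Rightarrow> nat \<Rightarrow> fvert + nat \<Rightarrow> nat" where
  "fB n m u = (case u of Inl Center \<Rightarrow> 1 | Inl (Uv i) \<Rightarrow> 1+i | Inl (Vv i) \<Rightarrow> 1+n+i | Inr j \<Rightarrow> 2*n+1+j)"

lemma GV_cases:
  assumes "u \<in> GV n m"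
  obtains "u = Inl Center" | i where "i \<in> {1..n}" "u = Inl (Uv i)" | i where "i \<in> {1..n}" "u = Inl (Vv i)"
    | j where "j \<in> {1..m}" "u = Inr j"
  using assms by (auto simp: GV_def join_V_def friendship_V_def empty_V_def)

lemma bijA: "bij_betw (fA n m) (GV n m) {1..card (GV n m)}"
  unfolding bij_betw_def GV_card
proof
  show "inj_on (fA n m) (GV n m)"
  proof (rule inj_onI)
    fix x y assume "x \<in> GV n m" "y \<in> GV n m" "fA n m x = fA n m y"
    then show "x = y"
      by (elim GV_cases) (auto simp: fA_def)
  qed
  show "fA n m ` GV n m = {1..2 * n + 1 + m}"
  proof
    show "fA n m ` GV n m \<subseteq> {1..2 * n + 1 + m}"
      by (auto elim!: GV_cases simp: fA_def)
    show "{1..2 * n + 1 + m} \<subseteq> fA n m ` GV n m"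
    proof
      fix k assume k: "k \<in> {1..2 * n + 1 + m}"
      consider "k = 1" | "2 \<le> k" "k \<le> m+1" | "m+2 \<le> k" "k \<le> m+1+n" | "m+2+n \<le> k" "k \<le> 2*n+1+m"
        using k by force
      then show "k \<in> fA n m ` GV n m"
      proof cases
        case 1 then show ?thesis by (intro image_eqI[of _ _ "Inl Center"]) (auto simp: fA_def)
      next
        case 2 then show ?thesis by (intro image_eqI[of _ _ "Inr (k-1)"]) (auto simp: fA_def)
      next
        case 3 then show ?thesis by (intro image_eqI[of _ _ "Inl (Uv (k-m-1))"]) (auto simp: fA_def)
      next
        case 4 then show ?thesis by (intro image_eqI[of _ _ "Inl (Vv (k-m-1-n))"]) (auto simp: fA_def)
      qed
    qed
  qed
qed

lemma bijB: "bij_betw (fB n m) (GV n m) {1..card (GV n m)}"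
  unfolding bij_betw_def GV_card
proof
  show "inj_on (fB n m) (GV n m)"
  proof (rule inj_onI)
    fix x y assume "x \<in> GV n m" "y \<in> GV n m" "fB n m x = fB n m y"
    then show "x = y"
      by (elim GV_cases) (auto simp: fB_def)
  qed
  show "fB n m ` GV n m = {1..2 * n + 1 + m}"
  proof
    show "fB n m ` GV n m \<subseteq> {1..2 * n + 1 + m}"
      by (auto elim!: GV_cases simp: fB_def)
    show "{1..2 * n + 1 + m} \<subseteq> fB n m ` GV n m"
    proof
      fix k assume k: "k \<in> {1..2 * n + 1 + m}"
      consider "k = 1" | "2 \<le> k" "k \<le> n+1" | "n+2 \<le> k" "k \<le> 2*n+1" | "2*n+2 \<le> k" "k \<le> 2*n+1+m"
        using k by force
      then show "k \<in> fB n m ` GV n m"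
      proof cases
        case 1 then show ?thesis by (intro image_eqI[of _ _ "Inl Center"]) (auto simp: fB_def)
      next
        case 2 then show ?thesis by (intro image_eqI[of _ _ "Inl (Uv (k-1))"]) (auto simp: fB_def)
      next
        case 3 then show ?thesis by (intro image_eqI[of _ _ "Inl (Vv (k-1-n))"]) (auto simp: fB_def)
      next
        case 4 then show ?thesis by (intro image_eqI[of _ _ "Inr (k-2*n-1)"]) (auto simp: fB_def)
      qed
    qed
  qed
qed


lemma UV_cases:
  assumes "z \<in> UV n"
  obtains i where "i \<in> {1..n}" "z = Uv i" | i where "i \<in> {1..n}" "z = Vv i"
  using assms by (auto simp: UV_def)

lemma ldA:
  assumes n: "n \<ge> 1" and m: "m \<ge> 1" and mn: "m < 2*n"
  shows "ld_antimagic (GV n m) (GE n m) (fA n m)"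
proof (rule suff[OF bijA])
  show "fA n m (Inl Center) = 1" by (simp add: fA_def)
  have wl: "m*2 \<le> Wsum m (fA n m)" by (rule W_lb) (auto simp: fA_def)
  then show "Wsum m (fA n m) \<noteq> 1" using m by linarith
  have wu: "Wsum m (fA n m) \<le> m*(m+1)" by (rule W_ub) (auto simp: fA_def)
  have k1: "m*(m+1) \<le> (2*n-1)*(m+1)" using mn by (intro mult_right_mono) auto
  have k2: "(2*n-1)*(m+1) < (2*n-1)*(m+2)" using n by simp
  fix y assume y: "y \<in> UV n"
  have lo: "fA n m (Inl y) + (2*n-1)*(m+2) \<le> Tsum n (fA n m)"
    by (rule T_rest[OF y]) (auto elim!: UV_cases simp: fA_def)
  have "(2*n-1)*(m+2) \<ge> 1*2" using n by (intro mult_mono) auto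
  then show "Tsum n (fA n m) \<noteq> 1 + fA n m (Inl y) \<and> Tsum n (fA n m) \<noteq> fA n m (Inl y) + Wsum m (fA n m)"
    using lo wu k1 k2 by linarith
qed

lemma ldB:
  assumes n: "n \<ge> 1" and m: "m \<ge> 1" and mn: "2*n \<le> m"
  shows "ld_antimagic (GV n m) (GE n m) (fB n m)"
proof (rule suff[OF bijB])
  show "fB n m (Inl Center) = 1" by (simp add: fB_def)
  have wl: "m*(2*n+2) \<le> Wsum m (fB n m)" by (rule W_lb) (auto simp: fB_def)
  then show "Wsum m (fB n m) \<noteq> 1" using m by (metis One_nat_def add_is_1 le_add2 le_trans mult_le_mono one_le_numeral not_one_le_zero numeral_le_one_iff semiring_norm(69) nat_mult_1 order.trans) 
  have tu: "Tsum n (fB n m) \<le> 2*n*(2*n+1)" by (rule T_ub) (auto elim!: UV_cases simp: fB_def)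
  have k1: "2*n*(2*n+2) \<le> m*(2*n+2)" using mn by (intro mult_right_mono) auto
  have k2: "2*n*(2*n+1) < 2*n*(2*n+2)" using n by simp
  fix y assume y: "y \<in> UV n"
  have lo: "fB n m (Inl y) + (2*n-1)*2 \<le> Tsum n (fB n m)"
    by (rule T_rest[OF y]) (auto elim!: UV_cases simp: fB_def)
  then show "Tsum n (fB n m) \<noteq> 1 + fB n m (Inl y) \<and> Tsum n (fB n m) \<noteq> fB n m (Inl y) + Wsum m (fB n m)"
    using n tu wl k1 k2 by linarith
qed

theorem mainTheorem3:
  fixes n m :: nat
  assumes "n \<ge> 1" and "m \<ge> 1"
  shows "chi_ld (join_V (friendship_V n) (empty_V m))
                (join_E (friendship_V n) (friendship_E n) (empty_V m) empty_E) = 2 * n + 2"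
proof -
  have ex: "\<exists>f. ld_antimagic (GV n m) (GE n m) f"
  proof (cases "m < 2*n")
    case True then show ?thesis using ldA assms by blast
  next
    case False then show ?thesis using ldB assms by (meson not_less)
  qed
  have "{card (vweight (GV n m) (GE n m) f ` GV n m) | f. ld_antimagic (GV n m) (GE n m) f} = {2*n+2}"
  proof (rule set_eqI, rule iffI)
    fix x assume "x \<in> {card (vweight (GV n m) (GE n m) f ` GV n m) | f. ld_antimagic (GV n m) (GE n m) f}"
    then show "x \<in> {2*n+2}" using count[OF _ assms(2)] by auto
  next
    fix x assume "x \<in> {2*n+2}"
    then show "x \<in> {card (vweight (GV n m) (GE n m) f ` GV n m) | f. ld_antimagic (GV n m) (GE n m) f}"
      using ex count[OF _ assms(2)] by force
  qed
  then show ?thesis unfolding chi_ld_def GV_def[symmetric] GE_def[symmetric] by simp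
qed

end
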